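(* Fix integers $T\ge 3$, $\Delta t\ge 1$ and probabilities $p_0,q_0\in(0,1)$, and consider observations $y^1,\dots,y^T$ generated by the relaxed change model described in the context. For $3\le t\le T$, $0\le r\le t-3$ and $0\le r'\le\min\{\Delta t-1,\,t-r-3\}$ define $$\mathbb{G}^t_a(r',r)=\Pr\big(\bm{y}^{1:t},\ r^t=r,\ a^{t-r}=1,\ c^{t-r-1-r'}=1,\ c^s=0 \text{ for all } t-r-1-r'<s<t-r\big),$$ i.e. the most recent change is at time $t-r$ and ends a collective anomaly whose start (the preceding change) is at time $(t-r-1)-r'$. Then $\mathbb{G}^3_a(0,0)=\mathbb{L}(y^1)\mathbb{L}(y^2)\mathbb{L}(y^3)\,p_0q_0$, and for every $3<t\le T$: $$\mathbb{G}^t_a(r',r)=\begin{cases}\mathbb{G}^{t-1}_a(r',r-1)\,\mathbb{P}(y^t\mid\bm{y}^{(t-r):(t-1)})\,(1-p_0), & r>0,\\ \mathbb{H}^{t-1}_c(r')\,\mathbb{L}(y^t)\,q_0, & r=0,\end{cases}$$ where $\mathbb{H}^{t-1}_c(r')=\Pr(\bm{y}^{1:(t-1)},\,r^{t-1}=r',\,a^{t-1-r'}=0)$.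
   Context: Relaxed change model: binary variables $c^t,a^t$ ($t=1,\dots,T$) with $c^1=1$, $a^1=0$. For $t>1$, call $t$ "open" if there is $t'\in\{t-\Delta t,\dots,t-1\}\setminus\{1\}$, $t'\ge 1$, with $c^{t'}=1$, $a^{t'}=0$ and $c^s=0$ for all $t'<s\le t-1$. Given the past, $c^t=1$ with probability $q_0$ if $t$ is open and $p_0$ otherwise; $a^t=1$ if $c^t=1$ and $t$ is open, and $a^t=0$ otherwise. Given a parametric density family $\Pr(y\mid\theta)$ and a prior $\Pr(\theta\mid\pi_0)$: $\theta^1$ is drawn from the prior; for $t>1$, $\theta^t=\theta^{t-1}$ if $c^t=0$, and $\theta^t$ is drawn independently from the prior if $c^t=1$; given $\theta^t$, $y^t\sim\Pr(\cdot\mid\theta^t)$ independently. $\Pr(\bm{y}^{1:t},E)$ denotes the joint density of $y^1,\dots,y^t$ together with the event $E$. Marginal likelihoods: for $1\le a\le b$, $\mathbb{L}(\bm{y}^{a:b})=\int\prod_{s=a}^b\Pr(y^s\mid\theta)\Pr(\theta\mid\pi_0)\,d\theta$ (with $\mathbb{L}(y^b)=\mathbb{L}(\bm{y}^{b:b})$), and for $a<b$, $\mathbb{P}(y^b\mid\bm{y}^{a:(b-1)})=\mathbb{L}(\bm{y}^{a:b})/\mathbb{L}(\bm{y}^{a:(b-1)})$. Run length: $r^t=t-\max\{s\le t: c^s=1\}$. *)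

theory Defs
  imports "HOL-Probability.Probability"
begin

text \<open>A change configuration is a predicate c :: nat => bool, where c s means c^s = 1.
  Times are 1,2,...; only values at times 1..t matter for events up to time t.\<close>

definition cfg :: "nat set \<Rightarrow> nat \<Rightarrow> bool" where
  "cfg C s = (s = 1 \<or> s \<in> C)"

text \<open>Time s is open, given the change indicators c and the anomaly indicators A of earlier times.\<close>
definition is_open :: "nat \<Rightarrow> (nat \<Rightarrow> bool) \<Rightarrow> (nat \<Rightarrow> bool) \<Rightarrow> nat \<Rightarrow> bool" where
  "is_open dt c A s = (\<exists>t'. s - dt \<le> t' \<and> t' < s \<and> t' \<noteq> 1 \<and> 1 \<le> t' \<and> c t' \<and> \<not> A t'
                          \<and> (\<forall>u. t' < u \<and> u < s \<longrightarrow> \<not> c u))"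

text \<open>aseq dt c n gives the anomaly indicators a^1..a^n (False elsewhere).\<close>
primrec aseq :: "nat \<Rightarrow> (nat \<Rightarrow> bool) \<Rightarrow> nat \<Rightarrow> (nat \<Rightarrow> bool)" where
  "aseq dt c 0 = (\<lambda>_. False)"
| "aseq dt c (Suc n) = (let A = aseq dt c n in
      A(Suc n := (1 < Suc n \<and> c (Suc n) \<and> is_open dt c A (Suc n))))"

definition opn :: "nat \<Rightarrow> (nat \<Rightarrow> bool) \<Rightarrow> nat \<Rightarrow> bool" where
  "opn dt c s = (1 < s \<and> is_open dt c (aseq dt c (s - 1)) s)"

definition anom :: "nat \<Rightarrow> (nat \<Rightarrow> bool) \<Rightarrow> nat \<Rightarrow> bool" where
  "anom dt c s = aseq dt c s s"

definition cprob :: "nat \<Rightarrow> real \<Rightarrow> real \<Rightarrow> nat \<Rightarrow> (nat \<Rightarrow> bool) \<Rightarrow> real" where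
  "cprob dt p0 q0 t c = (\<Prod>s\<in>{2..t}.
      if opn dt c s then (if c s then q0 else 1 - q0) else (if c s then p0 else 1 - p0))"

definition lastchg :: "(nat \<Rightarrow> bool) \<Rightarrow> nat \<Rightarrow> nat" where
  "lastchg c s = (GREATEST u. u \<le> s \<and> c u)"

definition runlen :: "(nat \<Rightarrow> bool) \<Rightarrow> nat \<Rightarrow> nat" where
  "runlen c t = t - lastchg c t"

text \<open>Conditional density of y^1..y^t given c^1..c^t: the parameters drawn at the change
  times are i.i.d. from the prior Q, theta^s equals the parameter drawn at the last change
  time before s, and y^s has density lik (y s) (theta^s).\<close>
definition ydens :: "'th measure \<Rightarrow> ('y \<Rightarrow> 'th \<Rightarrow> real) \<Rightarrow> (nat \<Rightarrow> 'y) \<Rightarrow> nat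
    \<Rightarrow> (nat \<Rightarrow> bool) \<Rightarrow> real" where
  "ydens Q lik y t c = (\<integral>\<theta>. (\<Prod>s\<in>{1..t}. lik (y s) (\<theta> (lastchg c s)))
       \<partial>(PiM {u\<in>{1..t}. c u} (\<lambda>_. Q)))"

text \<open>Joint density Pr(y^{1:t}, E) for an event E on c^1..c^t.\<close>
definition joint :: "'th measure \<Rightarrow> ('y \<Rightarrow> 'th \<Rightarrow> real) \<Rightarrow> (nat \<Rightarrow> 'y) \<Rightarrow> nat \<Rightarrow> real \<Rightarrow> real
    \<Rightarrow> nat \<Rightarrow> ((nat \<Rightarrow> bool) \<Rightarrow> bool) \<Rightarrow> real" where
  "joint Q lik y dt p0 q0 t E =
     (\<Sum>C\<in>{C. C \<subseteq> {2..t} \<and> E (cfg C)}. cprob dt p0 q0 t (cfg C) * ydens Q lik y t (cfg C))"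

definition margL :: "'th measure \<Rightarrow> ('y \<Rightarrow> 'th \<Rightarrow> real) \<Rightarrow> (nat \<Rightarrow> 'y) \<Rightarrow> nat \<Rightarrow> nat \<Rightarrow> real" where
  "margL Q lik y a b = (\<integral>\<theta>. (\<Prod>s\<in>{a..b}. lik (y s) \<theta>) \<partial>Q)"

definition predP :: "'th measure \<Rightarrow> ('y \<Rightarrow> 'th \<Rightarrow> real) \<Rightarrow> (nat \<Rightarrow> 'y) \<Rightarrow> nat \<Rightarrow> nat \<Rightarrow> real" where
  "predP Q lik y a b = margL Q lik y a b / margL Q lik y a (b - 1)"

definition Ga :: "'th measure \<Rightarrow> ('y \<Rightarrow> 'th \<Rightarrow> real) \<Rightarrow> (nat \<Rightarrow> 'y) \<Rightarrow> nat \<Rightarrow> real \<Rightarrow> real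
    \<Rightarrow> nat \<Rightarrow> nat \<Rightarrow> nat \<Rightarrow> real" where
  "Ga Q lik y dt p0 q0 t r' r = joint Q lik y dt p0 q0 t (\<lambda>c.
      runlen c t = r \<and> anom dt c (t - r) \<and> c (t - r - 1 - r')
      \<and> (\<forall>s. t - r - 1 - r' < s \<and> s < t - r \<longrightarrow> \<not> c s))"

definition Hc :: "'th measure \<Rightarrow> ('y \<Rightarrow> 'th \<Rightarrow> real) \<Rightarrow> (nat \<Rightarrow> 'y) \<Rightarrow> nat \<Rightarrow> real \<Rightarrow> real
    \<Rightarrow> nat \<Rightarrow> nat \<Rightarrow> real" where
  "Hc Q lik y dt p0 q0 t r' = joint Q lik y dt p0 q0 t (\<lambda>c.
      runlen c t = r' \<and> \<not> anom dt c (t - r'))"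

end

theory Submission
  imports Defs
begin

lemma lastchg_props:
  assumes "c 1" "1 \<le> s"
  shows "lastchg c s \<le> s" "c (lastchg c s)" "1 \<le> lastchg c s"
    "\<And>w. lastchg c s < w \<Longrightarrow> w \<le> s \<Longrightarrow> \<not> c w"
proof -
  have ex: "1 \<le> s \<and> c 1" using assms by auto
  show "lastchg c s \<le> s" "c (lastchg c s)"
    unfolding lastchg_def using GreatestI_nat[of "\<lambda>u. u \<le> s \<and> c u" 1 s] ex by auto
  show "1 \<le> lastchg c s"
    unfolding lastchg_def using Greatest_le_nat[of "\<lambda>u. u \<le> s \<and> c u" 1 s] ex by auto
  fix w assume "lastchg c s < w" "w \<le> s"
  then show "\<not> c w"
    unfolding lastchg_def using Greatest_le_nat[of "\<lambda>u. u \<le> s \<and> c u" w s] by force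
qed

lemma lastchg_eqI:
  assumes "u \<le> s" "c u" "\<And>w. u < w \<Longrightarrow> w \<le> s \<Longrightarrow> \<not> c w"
  shows "lastchg c s = u"
  unfolding lastchg_def
proof (rule Greatest_equality)
  show "u \<le> s \<and> c u" using assms by auto
  fix x assume "x \<le> s \<and> c x" then show "x \<le> u" using assms(3) by (meson not_le)
qed

lemma lastchg_local:
  assumes "\<And>u. u \<le> s \<Longrightarrow> c u = c' u"
  shows "lastchg c s = lastchg c' s"
  unfolding lastchg_def using assms by (metis (no_types, lifting))

lemma aseq_local:
  assumes "\<And>u. u \<le> n \<Longrightarrow> c u = c' u"
  shows "aseq dt c n = aseq dt c' n"
  using assms
proof (induction n)
  case 0 then show ?case by simp
next
  case (Suc n)
  have IH: "aseq dt c n = aseq dt c' n" using Suc by auto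
  have "is_open dt c (aseq dt c n) (Suc n) = is_open dt c' (aseq dt c n) (Suc n)"
    unfolding is_open_def using Suc.prems
    by (intro ex_cong1 conj_cong refl) (auto simp: less_Suc_eq_le)
  then show ?case using IH Suc.prems by (simp add: Let_def)
qed

lemma aseq_stable: "s \<le> n \<Longrightarrow> aseq dt c n s = aseq dt c s s"
proof (induction n)
  case 0 then show ?case by simp
next
  case (Suc n)
  then show ?case by (cases "s = Suc n") (auto simp: Let_def)
qed

lemma anom_local:
  assumes "\<And>u. u \<le> s \<Longrightarrow> c u = c' u"
  shows "anom dt c s = anom dt c' s"
  unfolding anom_def using aseq_local[OF assms] by simp

lemma opn_local:
  assumes "\<And>u. u < s \<Longrightarrow> c u = c' u"
  shows "opn dt c s = opn dt c' s"
proof -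
  show ?thesis
  proof (cases "s = 0")
    case True then show ?thesis by (simp add: opn_def)
  next
    case False
    have a: "aseq dt c (s-1) = aseq dt c' (s-1)" using assms False by (intro aseq_local) auto
    show ?thesis unfolding opn_def a is_open_def using assms
      by (intro conj_cong refl ex_cong1) auto
  qed
qed

lemma cprob_local:
  assumes "\<And>u. u \<le> t \<Longrightarrow> c u = c' u"
  shows "cprob dt p0 q0 t c = cprob dt p0 q0 t c'"
  unfolding cprob_def
proof (rule prod.cong[OF refl])
  fix s assume "s \<in> {2..t}"
  then have "opn dt c s = opn dt c' s" using assms by (intro opn_local) auto
  then show "(if opn dt c s then if c s then q0 else 1 - q0 else if c s then p0 else 1 - p0) =
         (if opn dt c' s then if c' s then q0 else 1 - q0 else if c' s then p0 else 1 - p0)"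
    using assms \<open>s \<in> {2..t}\<close> by auto
qed

lemma cprob_step:
  assumes "2 \<le> t"
  shows "cprob dt p0 q0 t c = cprob dt p0 q0 (t-1) c *
     (if opn dt c t then (if c t then q0 else 1 - q0) else (if c t then p0 else 1 - p0))"
proof -
  have "{2..t} = insert t {2..t-1}" using assms by auto
  moreover have "t \<notin> {2..t-1}" using assms by auto
  ultimately show ?thesis unfolding cprob_def by (simp add: mult.commute)
qed

definition seg :: "(nat \<Rightarrow> bool) \<Rightarrow> nat \<Rightarrow> nat \<Rightarrow> nat set" where
  "seg c t u = {s\<in>{1..t}. lastchg c s = u}"

lemma seg_interval:
  assumes "c 1" "1 \<le> u" "u \<le> t" "c u"
  shows "\<exists>v. u \<le> v \<and> v \<le> t \<and> seg c t u = {u..v}"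
proof -
  let ?S = "seg c t u"
  have fin: "finite ?S" unfolding seg_def by auto
  have lu: "lastchg c u = u" using assms by (intro lastchg_eqI) auto
  have uS: "u \<in> ?S" using assms lu unfolding seg_def by auto
  define v where "v = Max ?S"
  have vS: "v \<in> ?S" unfolding v_def using fin uS by (intro Max_in) auto
  have sub: "?S \<subseteq> {u..v}"
  proof
    fix s assume s: "s \<in> ?S"
    then have "lastchg c s = u" "1 \<le> s" unfolding seg_def by auto
    then have "u \<le> s" using lastchg_props(1)[of c s] assms(1) by auto
    moreover have "s \<le> v" unfolding v_def using fin s by auto
    ultimately show "s \<in> {u..v}" by auto
  qed
  have sup: "{u..v} \<subseteq> ?S"
  proof
    fix s assume s: "s \<in> {u..v}"
    have lv: "lastchg c v = u" "1 \<le> v" "v \<le> t" using vS unfolding seg_def by auto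
    have nc: "\<And>w. u < w \<Longrightarrow> w \<le> v \<Longrightarrow> \<not> c w"
      using lastchg_props(4)[of c v] assms(1) lv by auto
    have "lastchg c s = u" using s nc assms by (intro lastchg_eqI) auto
    then show "s \<in> ?S" using s lv assms unfolding seg_def by auto
  qed
  have "u \<le> v" "v \<le> t" using vS sub unfolding seg_def by auto
  then show ?thesis using sub sup by blast
qed

lemma ydens_prod:
  assumes Q: "prob_space Q" and c1: "c 1"
    and int: "\<And>a b. 1 \<le> a \<Longrightarrow> a \<le> b \<Longrightarrow> b \<le> t \<Longrightarrow>
           integrable Q (\<lambda>\<theta>. \<Prod>s\<in>{a..b}. lik (y s) \<theta>)"
  shows "ydens Q lik y t c =
    (\<Prod>u\<in>{u\<in>{1..t}. c u}. \<integral>\<theta>. (\<Prod>s\<in>seg c t u. lik (y s) \<theta>) \<partial>Q)"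
proof -
  interpret product_sigma_finite "\<lambda>_. Q"
    unfolding product_sigma_finite_def using Q prob_space_imp_sigma_finite by blast
  let ?J = "{u\<in>{1..t}. c u}"
  have eq: "(\<Prod>s\<in>{1..t}. lik (y s) (\<theta> (lastchg c s))) =
      (\<Prod>u\<in>?J. (\<lambda>x. \<Prod>s\<in>seg c t u. lik (y s) x) (\<theta> u))" for \<theta> :: "nat \<Rightarrow> 'a"
  proof -
    have "lastchg c ` {1..t} \<subseteq> ?J" using lastchg_props[of c] c1 by fastforce
    then have "(\<Prod>s\<in>{1..t}. lik (y s) (\<theta> (lastchg c s))) =
       (\<Prod>u\<in>?J. \<Prod>s\<in>{s \<in> {1..t}. lastchg c s = u}. lik (y s) (\<theta> (lastchg c s)))"
      by (intro prod.group[symmetric]) auto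
    also have "\<dots> = (\<Prod>u\<in>?J. (\<lambda>x. \<Prod>s\<in>seg c t u. lik (y s) x) (\<theta> u))"
      unfolding seg_def by (intro prod.cong refl) auto
    finally show ?thesis .
  qed
  have "ydens Q lik y t c = (\<integral>\<theta>. (\<Prod>u\<in>?J. (\<lambda>x. \<Prod>s\<in>seg c t u. lik (y s) x) (\<theta> u)) \<partial>(PiM ?J (\<lambda>_. Q)))"
    unfolding ydens_def eq ..
  also have "\<dots> = (\<Prod>u\<in>?J. \<integral>\<theta>. (\<Prod>s\<in>seg c t u. lik (y s) \<theta>) \<partial>Q)"
  proof (rule product_integral_prod)
    fix u assume "u \<in> ?J"
    then obtain v where "u \<le> v" "v \<le> t" "seg c t u = {u..v}" using seg_interval[of c u t] c1 by auto
    then show "integrable Q (\<lambda>x. \<Prod>s\<in>seg c t u. lik (y s) x)" using int \<open>u \<in> ?J\<close> by auto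
  qed auto
  finally show ?thesis .
qed

lemma cfg_1: "cfg C 1" by (simp add: cfg_def)

lemma ydens_new:
  assumes Q: "prob_space Q" and C0: "C0 \<subseteq> {2..t-1}" and t: "2 \<le> t"
    and int: "\<And>a b. 1 \<le> a \<Longrightarrow> a \<le> b \<Longrightarrow> b \<le> t \<Longrightarrow>
           integrable Q (\<lambda>\<theta>. \<Prod>s\<in>{a..b}. lik (y s) \<theta>)"
  shows "ydens Q lik y t (cfg (insert t C0)) = ydens Q lik y (t-1) (cfg C0) * margL Q lik y t t"
proof -
  let ?c = "cfg C0" and ?c' = "cfg (insert t C0)"
  let ?J = "{u\<in>{1..t-1}. ?c u}" and ?J' = "{u\<in>{1..t}. ?c' u}"
  have J': "?J' = insert t ?J" using t C0 by (auto simp: cfg_def)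
  have tJ: "t \<notin> ?J" by auto
  have agree: "\<And>u. u \<le> t-1 \<Longrightarrow> ?c' u = ?c u" using t by (auto simp: cfg_def)
  have lt: "lastchg ?c' t = t" by (intro lastchg_eqI) (auto simp: cfg_def)
  have segu: "seg ?c' t u = seg ?c (t-1) u" if "u \<in> ?J" for u
  proof -
    have "\<And>s. s \<in> {1..t-1} \<Longrightarrow> lastchg ?c' s = lastchg ?c s"
      using agree by (intro lastchg_local) auto
    moreover have "u \<noteq> t" using that by auto
    ultimately show ?thesis unfolding seg_def using lt t
    proof (intro set_eqI iffI)
      fix s assume "s \<in> {s \<in> {1..t}. lastchg ?c' s = u}"
      then show "s \<in> {s \<in> {1..t-1}. lastchg ?c s = u}"
        using lt \<open>u \<noteq> t\<close> \<open>\<And>s. s \<in> {1..t-1} \<Longrightarrow> lastchg ?c' s = lastchg ?c s\<close>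
        by (cases "s = t") auto
    next
      fix s assume "s \<in> {s \<in> {1..t-1}. lastchg ?c s = u}"
      then show "s \<in> {s \<in> {1..t}. lastchg ?c' s = u}"
        using \<open>\<And>s. s \<in> {1..t-1} \<Longrightarrow> lastchg ?c' s = lastchg ?c s\<close> by auto
    qed
  qed
  have segt: "seg ?c' t t = {t}"
  proof -
    have "\<And>s. 1 \<le> s \<Longrightarrow> lastchg ?c' s \<le> s" using lastchg_props(1)[of ?c'] cfg_1 by blast
    then show ?thesis unfolding seg_def using lt t by force
  qed
  have "ydens Q lik y t ?c' = (\<Prod>u\<in>?J'. \<integral>\<theta>. (\<Prod>s\<in>seg ?c' t u. lik (y s) \<theta>) \<partial>Q)"
    by (rule ydens_prod[where c="?c'" and lik=lik and y=y and t=t, OF Q cfg_1 int])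
  also have "\<dots> = (\<integral>\<theta>. (\<Prod>s\<in>seg ?c' t t. lik (y s) \<theta>) \<partial>Q) *
      (\<Prod>u\<in>?J. \<integral>\<theta>. (\<Prod>s\<in>seg ?c' t u. lik (y s) \<theta>) \<partial>Q)"
    unfolding J' using tJ by (simp add: prod.insert)
  also have "\<dots> = margL Q lik y t t * (\<Prod>u\<in>?J. \<integral>\<theta>. (\<Prod>s\<in>seg ?c (t-1) u. lik (y s) \<theta>) \<partial>Q)"
    unfolding segt margL_def using segu by (intro arg_cong2[where f="(*)"] prod.cong) auto
  also have "(\<Prod>u\<in>?J. \<integral>\<theta>. (\<Prod>s\<in>seg ?c (t-1) u. lik (y s) \<theta>) \<partial>Q) = ydens Q lik y (t-1) ?c"
    by (rule ydens_prod[where c="?c" and lik=lik and y=y and t="t-1", OF Q cfg_1, symmetric]) (use int in auto)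
  finally show ?thesis by simp
qed

lemma margL_zero:
  assumes nn: "\<And>v \<theta>. 0 \<le> lik v \<theta>" and k: "k \<le> t-1" "1 \<le> t"
    and i1: "integrable Q (\<lambda>\<theta>. \<Prod>s\<in>{k..t-1}. lik (y s) \<theta>)"
    and z: "margL Q lik y k (t-1) = 0"
  shows "margL Q lik y k t = 0"
proof -
  have "AE \<theta> in Q. (\<Prod>s\<in>{k..t-1}. lik (y s) \<theta>) = 0"
    using z i1 nn unfolding margL_def by (subst (asm) integral_nonneg_eq_0_iff_AE) (auto intro: prod_nonneg)
  moreover have "{k..t} = insert t {k..t-1}" using k by auto
  ultimately have "AE \<theta> in Q. (\<Prod>s\<in>{k..t}. lik (y s) \<theta>) = 0"
    using k by (auto simp: prod.insert elim!: AE_mp)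
  then show ?thesis unfolding margL_def by (rule integral_eq_zero_AE)
qed

lemma ydens_ext:
  assumes Q: "prob_space Q" and C: "C \<subseteq> {2..t-1}" and t: "2 \<le> t"
    and int: "\<And>a b. 1 \<le> a \<Longrightarrow> a \<le> b \<Longrightarrow> b \<le> t \<Longrightarrow>
           integrable Q (\<lambda>\<theta>. \<Prod>s\<in>{a..b}. lik (y s) \<theta>)"
    and nn: "\<And>v \<theta>. 0 \<le> lik v \<theta>"
  shows "ydens Q lik y t (cfg C) = ydens Q lik y (t-1) (cfg C) * predP Q lik y (lastchg (cfg C) (t-1)) t"
proof -
  let ?c = "cfg C"
  define k where "k = lastchg ?c (t-1)"
  let ?J = "{u\<in>{1..t-1}. ?c u}" and ?J' = "{u\<in>{1..t}. ?c u}"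
  have ct: "\<not> ?c t" using C t by (auto simp: cfg_def)
  have tl: "\<And>s. s \<le> t-1 \<longleftrightarrow> s < t" using t by auto
  have J': "?J' = ?J" using ct unfolding tl by (auto simp: le_less)
  have kp: "k \<le> t-1" "?c k" "1 \<le> k" "\<And>w. k < w \<Longrightarrow> w \<le> t-1 \<Longrightarrow> \<not> ?c w"
    using lastchg_props[of ?c "t-1"] cfg_1 t unfolding k_def by auto
  have kJ: "k \<in> ?J" using kp by auto
  have nc: "\<And>w. k < w \<Longrightarrow> w \<le> t \<Longrightarrow> \<not> ?c w" using kp(4) ct unfolding tl
    by (auto simp: le_less)
  have lastk: "lastchg ?c s = k" if "k \<le> s" "s \<le> t" for s
    using that nc kp by (intro lastchg_eqI) auto
  have lastlt: "lastchg ?c s < k" if "1 \<le> s" "s < k" for s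
    using lastchg_props(1)[of ?c s] cfg_1 that by fastforce
  have segb: "seg ?c b k = {k..b}" if "k \<le> b" "b \<le> t" for b
  proof (intro set_eqI iffI)
    fix s assume s: "s \<in> seg ?c b k"
    then have s1: "1 \<le> s" "s \<le> b" "lastchg ?c s = k" unfolding seg_def by auto
    have "\<not> s < k" using lastlt[OF s1(1)] s1(3) by auto
    then show "s \<in> {k..b}" using s1 by auto
  next
    fix s assume "s \<in> {k..b}"
    then show "s \<in> seg ?c b k" unfolding seg_def using lastk[of s] kp(3) that by auto
  qed
  have segk1: "seg ?c (t-1) k = {k..t-1}" using segb kp by auto
  have segk: "seg ?c t k = {k..t}" using segb kp t by auto
  have segu: "seg ?c t u = seg ?c (t-1) u" if "u \<noteq> k" for u
    unfolding seg_def using lastk[of t] that t kp unfolding tl by (auto simp: le_less)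
  let ?I = "\<lambda>t u. \<integral>\<theta>. (\<Prod>s\<in>seg ?c t u. lik (y s) \<theta>) \<partial>Q"
  define R where "R = (\<Prod>u\<in>?J - {k}. ?I (t-1) u)"
  have "ydens Q lik y t ?c = (\<Prod>u\<in>?J'. ?I t u)"
    by (rule ydens_prod[where c="?c" and lik=lik and y=y and t=t, OF Q cfg_1 int])
  also have "\<dots> = ?I t k * (\<Prod>u\<in>?J - {k}. ?I t u)"
    unfolding J' using kJ by (subst prod.remove[of _ k]) auto
  also have "\<dots> = margL Q lik y k t * R"
    unfolding R_def segk margL_def using segu by (intro arg_cong2[where f="(*)"] prod.cong) auto
  finally have e1: "ydens Q lik y t ?c = margL Q lik y k t * R" .
  have "ydens Q lik y (t-1) ?c = (\<Prod>u\<in>?J. ?I (t-1) u)"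
    by (rule ydens_prod[where c="?c" and lik=lik and y=y and t="t-1", OF Q cfg_1]) (use int in auto)
  also have "\<dots> = ?I (t-1) k * R"
    unfolding R_def using kJ by (subst prod.remove[of _ k]) auto
  finally have e2: "ydens Q lik y (t-1) ?c = margL Q lik y k (t-1) * R"
    unfolding segk1 margL_def .
  show ?thesis
  proof (cases "margL Q lik y k (t-1) = 0")
    case True
    have i1: "integrable Q (\<lambda>\<theta>. \<Prod>s\<in>{k..t-1}. lik (y s) \<theta>)" using int kp by auto
    have "margL Q lik y k t = 0"
      by (rule margL_zero[where lik=lik and Q=Q and y=y, OF nn kp(1) _ i1 True]) (use t in auto)
    then show ?thesis using e1 e2 True by (simp add: k_def)
  next
    case False
    then show ?thesis using e1 e2 unfolding predP_def k_def[symmetric] by (simp add: field_simps)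
  qed
qed

lemma anom_opn: "1 \<le> t \<Longrightarrow> anom dt c t = (c t \<and> opn dt c t)"
  by (cases t) (auto simp: anom_def opn_def Let_def)

lemma opn_char:
  assumes cL: "c L" and Lt: "L < t" and gap: "\<And>u. L < u \<Longrightarrow> u < t \<Longrightarrow> \<not> c u"
  shows "opn dt c t = (1 < t \<and> t - dt \<le> L \<and> L \<noteq> 1 \<and> 1 \<le> L \<and> \<not> anom dt c L)"
proof -
  have uniq: "t' = L" if "c t'" "t' < t" "\<forall>u. t' < u \<and> u < t \<longrightarrow> \<not> c u" for t'
    using that cL Lt gap by (metis linorder_neqE_nat)
  have st: "aseq dt c (t-1) L = anom dt c L" unfolding anom_def using Lt by (intro aseq_stable) auto
  show ?thesis unfolding opn_def is_open_def
  proof (intro iffI)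
    assume "1 < t \<and> (\<exists>t'. t - dt \<le> t' \<and> t' < t \<and> t' \<noteq> 1 \<and> 1 \<le> t' \<and> c t' \<and>
      \<not> aseq dt c (t - 1) t' \<and> (\<forall>u. t' < u \<and> u < t \<longrightarrow> \<not> c u))"
    then obtain t' where "1 < t" "t - dt \<le> t'" "t' < t" "t' \<noteq> 1" "1 \<le> t'" "c t'"
      "\<not> aseq dt c (t - 1) t'" "\<forall>u. t' < u \<and> u < t \<longrightarrow> \<not> c u" by blast
    moreover have "t' = L" using uniq calculation by blast
    ultimately show "1 < t \<and> t - dt \<le> L \<and> L \<noteq> 1 \<and> 1 \<le> L \<and> \<not> anom dt c L" using st by auto
  next
    assume "1 < t \<and> t - dt \<le> L \<and> L \<noteq> 1 \<and> 1 \<le> L \<and> \<not> anom dt c L"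
    then show "1 < t \<and> (\<exists>t'. t - dt \<le> t' \<and> t' < t \<and> t' \<noteq> 1 \<and> 1 \<le> t' \<and> c t' \<and>
      \<not> aseq dt c (t - 1) t' \<and> (\<forall>u. t' < u \<and> u < t \<longrightarrow> \<not> c u))"
      using st cL Lt gap by blast
  qed
qed

lemma lastchg_skip:
  assumes C: "C \<subseteq> {2..t-1}" and t: "2 \<le> t"
  shows "lastchg (cfg C) t = lastchg (cfg C) (t-1)"
proof -
  have ct: "\<not> cfg C t" using C t by (auto simp: cfg_def)
  have p: "lastchg (cfg C) (t-1) \<le> t-1" "cfg C (lastchg (cfg C) (t-1))"
     "\<And>w. lastchg (cfg C) (t-1) < w \<Longrightarrow> w \<le> t-1 \<Longrightarrow> \<not> cfg C w"
    using lastchg_props[of "cfg C" "t-1"] cfg_1 t by auto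
  have "\<And>w. lastchg (cfg C) (t-1) < w \<Longrightarrow> w \<le> t \<Longrightarrow> \<not> cfg C w"
  proof -
    fix w assume "lastchg (cfg C) (t-1) < w" "w \<le> t"
    then show "\<not> cfg C w" using p(3)[of w] ct t by (cases "w = t") auto
  qed
  then show ?thesis using p by (intro lastchg_eqI) auto
qed

lemma Ga_step_pos:
  assumes Q: "prob_space Q" and nn: "\<And>v \<theta>. 0 \<le> lik v \<theta>"
    and int: "\<And>a b. 1 \<le> a \<Longrightarrow> a \<le> b \<Longrightarrow> b \<le> t \<Longrightarrow>
           integrable Q (\<lambda>\<theta>. \<Prod>s\<in>{a..b}. lik (y s) \<theta>)"
    and t: "3 < t" and r: "0 < r" "r \<le> t - 3"
  shows "Ga Q lik y dt p0 q0 t r' r = Ga Q lik y dt p0 q0 (t-1) r' (r-1) * predP Q lik y (t-r) t * (1-p0)"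
proof -
  define E where "E = (\<lambda>c. runlen c t = r \<and> anom dt c (t - r) \<and> c (t - r - 1 - r')
      \<and> (\<forall>s. t - r - 1 - r' < s \<and> s < t - r \<longrightarrow> \<not> c s))"
  define E1 where "E1 = (\<lambda>c. runlen c (t-1) = r-1 \<and> anom dt c (t - r) \<and> c (t - r - 1 - r')
      \<and> (\<forall>s. t - r - 1 - r' < s \<and> s < t - r \<longrightarrow> \<not> c s))"
  have tr: "t - 1 - (r - 1) = t - r" using r t by auto
  have GaE: "Ga Q lik y dt p0 q0 t r' r = joint Q lik y dt p0 q0 t E"
    unfolding Ga_def E_def ..
  have GaE1: "Ga Q lik y dt p0 q0 (t-1) r' (r-1) = joint Q lik y dt p0 q0 (t-1) E1"
    unfolding Ga_def E1_def tr ..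
  have S: "{C. C \<subseteq> {2..t} \<and> E (cfg C)} = {C. C \<subseteq> {2..t-1} \<and> E1 (cfg C)}"
  proof (intro set_eqI iffI; clarify)
    fix C assume C: "C \<subseteq> {2..t}" "E (cfg C)"
    have "t \<notin> C"
    proof
      assume "t \<in> C"
      then have "lastchg (cfg C) t = t" by (intro lastchg_eqI) (auto simp: cfg_def)
      then show False using C(2) r unfolding E_def runlen_def by auto
    qed
    have C': "C \<subseteq> {2..t-1}"
    proof
      fix x assume "x \<in> C" then show "x \<in> {2..t-1}" using C(1) \<open>t \<notin> C\<close> by (cases "x = t") force+
    qed
    have "lastchg (cfg C) (t-1) \<le> t-1" using lastchg_props(1)[of "cfg C" "t-1"] cfg_1 t by auto
    then show "C \<subseteq> {2..t-1} \<and> E1 (cfg C)" using C' C(2) lastchg_skip[OF C'] t r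
      unfolding E_def E1_def runlen_def by auto
  next
    fix C assume C: "C \<subseteq> {2..t-1}" "E1 (cfg C)"
    have "lastchg (cfg C) (t-1) \<le> t-1" using lastchg_props(1)[of "cfg C" "t-1"] cfg_1 t by auto
    moreover have "C \<subseteq> {2..t}"
    proof
      fix x assume "x \<in> C" then have "x \<in> {2..t-1}" using C(1) by blast
      then show "x \<in> {2..t}" by auto
    qed
    ultimately show "C \<subseteq> {2..t} \<and> E (cfg C)" using C lastchg_skip[OF C(1)] t r
      unfolding E_def E1_def runlen_def by auto
  qed
  have tm: "cprob dt p0 q0 t (cfg C) * ydens Q lik y t (cfg C) =
     cprob dt p0 q0 (t-1) (cfg C) * ydens Q lik y (t-1) (cfg C) * (predP Q lik y (t-r) t * (1-p0))"
    if C: "C \<subseteq> {2..t-1}" "E1 (cfg C)" for C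
  proof -
    let ?c = "cfg C"
    define L where "L = lastchg ?c (t-1)"
    have p: "L \<le> t-1" "?c L" "\<And>w. L < w \<Longrightarrow> w \<le> t-1 \<Longrightarrow> \<not> ?c w"
      using lastchg_props[of ?c "t-1"] cfg_1 t unfolding L_def by auto
    have L: "L = t - r" using C(2) p(1) r t unfolding E1_def runlen_def L_def by auto
    have ct: "\<not> ?c t" using C t by (auto simp: cfg_def)
    have "\<not> opn dt ?c t"
      using opn_char[of ?c L t dt] p C(2) t unfolding E1_def L by auto
    then have cp: "cprob dt p0 q0 t ?c = cprob dt p0 q0 (t-1) ?c * (1-p0)"
      using cprob_step[of t dt p0 q0 ?c] ct t by auto
    have yd: "ydens Q lik y t ?c = ydens Q lik y (t-1) ?c * predP Q lik y (t-r) t"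
      using ydens_ext[where lik=lik and y=y, OF Q C(1) _ int nn] t L unfolding L_def by auto
    show ?thesis using cp yd by simp
  qed
  have "joint Q lik y dt p0 q0 t E = (\<Sum>C\<in>{C. C \<subseteq> {2..t-1} \<and> E1 (cfg C)}.
      cprob dt p0 q0 (t-1) (cfg C) * ydens Q lik y (t-1) (cfg C) * (predP Q lik y (t-r) t * (1-p0)))"
    unfolding joint_def S using tm by (intro sum.cong refl) auto
  also have "\<dots> = joint Q lik y dt p0 q0 (t-1) E1 * (predP Q lik y (t-r) t * (1-p0))"
    unfolding joint_def by (simp add: sum_distrib_right)
  finally show ?thesis using GaE GaE1 by simp
qed

lemma Ga_step_zero:
  assumes Q: "prob_space Q"
    and int: "\<And>a b. 1 \<le> a \<Longrightarrow> a \<le> b \<Longrightarrow> b \<le> t \<Longrightarrow>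
           integrable Q (\<lambda>\<theta>. \<Prod>s\<in>{a..b}. lik (y s) \<theta>)"
    and t: "3 \<le> t" and r': "r' \<le> dt - 1" "r' \<le> t - 3" and dt: "1 \<le> dt"
  shows "Ga Q lik y dt p0 q0 t r' 0 = Hc Q lik y dt p0 q0 (t-1) r' * margL Q lik y t t * q0"
proof -
  define L where "L = t - 1 - r'"
  have Lp: "2 \<le> L" "L < t" "t - dt \<le> L" using t r' dt unfolding L_def by auto
  define E where "E = (\<lambda>c. runlen c t = 0 \<and> anom dt c t \<and> c L
      \<and> (\<forall>s. L < s \<and> s < t \<longrightarrow> \<not> c s))"
  define H where "H = (\<lambda>c. runlen c (t-1) = r' \<and> \<not> anom dt c L)"
  have GaE: "Ga Q lik y dt p0 q0 t r' 0 = joint Q lik y dt p0 q0 t E"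
    unfolding Ga_def E_def L_def by simp
  have HcH: "Hc Q lik y dt p0 q0 (t-1) r' = joint Q lik y dt p0 q0 (t-1) H"
    unfolding Hc_def H_def L_def ..
  have eqv: "E (cfg (insert t C0)) \<longleftrightarrow> H (cfg C0)" and opnt: "H (cfg C0) \<Longrightarrow> opn dt (cfg (insert t C0)) t"
    if C0: "C0 \<subseteq> {2..t-1}" for C0
  proof -
    let ?c = "cfg C0" and ?c' = "cfg (insert t C0)"
    have agree: "\<And>u. u < t \<Longrightarrow> ?c' u = ?c u" by (auto simp: cfg_def)
    have ct': "?c' t" by (simp add: cfg_def)
    have lt: "lastchg ?c' t = t" by (intro lastchg_eqI) (auto simp: cfg_def)
    have an: "anom dt ?c' L = anom dt ?c L" using Lp agree by (intro anom_local) auto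
    have anomt: "anom dt ?c' t = opn dt ?c' t" using anom_opn[of t dt ?c'] ct' t by auto
    have lp: "lastchg ?c (t-1) \<le> t-1" "?c (lastchg ?c (t-1))"
      "\<And>w. lastchg ?c (t-1) < w \<Longrightarrow> w \<le> t-1 \<Longrightarrow> \<not> ?c w"
      using lastchg_props[of ?c "t-1"] cfg_1 t by auto
    show "E ?c' \<longleftrightarrow> H ?c"
    proof
      assume e: "E ?c'"
      then have cL: "?c' L" and gap: "\<And>s. L < s \<Longrightarrow> s < t \<Longrightarrow> \<not> ?c' s" and o: "opn dt ?c' t"
        unfolding E_def anomt by auto
      have "lastchg ?c (t-1) = L" using cL gap agree Lp by (intro lastchg_eqI) auto
      moreover have "\<not> anom dt ?c' L" using opn_char[of ?c' L t dt] cL gap Lp o by auto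
      then have "\<not> anom dt ?c L" using an by simp
      moreover have "t - 1 - L = r'" using t r' unfolding L_def by auto
      ultimately show "H ?c" unfolding H_def runlen_def by auto
    next
      assume h: "H ?c"
      then have "t - 1 - lastchg ?c (t-1) = r'" unfolding H_def runlen_def by simp
      then have "lastchg ?c (t-1) = L" using lp(1) unfolding L_def by arith
      then have cL: "?c' L" and gap: "\<And>s. L < s \<Longrightarrow> s < t \<Longrightarrow> \<not> ?c' s"
        using lp agree Lp by auto
      have "opn dt ?c' t" using opn_char[of ?c' L t dt] cL gap Lp h an unfolding H_def by auto
      then show "E ?c'" unfolding E_def runlen_def lt anomt using cL gap by auto
    qed
    assume h: "H ?c"
    then have "t - 1 - lastchg ?c (t-1) = r'" unfolding H_def runlen_def by simp
    then have "lastchg ?c (t-1) = L" using lp(1) unfolding L_def by arith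
    then have cL: "?c' L" and gap: "\<And>s. L < s \<Longrightarrow> s < t \<Longrightarrow> \<not> ?c' s"
      using lp agree Lp by auto
    show "opn dt ?c' t" using opn_char[of ?c' L t dt] cL gap Lp h an unfolding H_def by auto
  qed
  define A where "A = {C. C \<subseteq> {2..t-1} \<and> H (cfg C)}"
  have S: "{C. C \<subseteq> {2..t} \<and> E (cfg C)} = insert t ` A"
  proof (intro set_eqI iffI)
    fix C assume "C \<in> {C. C \<subseteq> {2..t} \<and> E (cfg C)}"
    then have C: "C \<subseteq> {2..t}" "E (cfg C)" by auto
    have "lastchg (cfg C) t = t" using C(2) unfolding E_def runlen_def
      using lastchg_props(1)[of "cfg C" t] cfg_1 t by auto
    then have "cfg C t" using lastchg_props(2)[of "cfg C" t] cfg_1 t by auto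
    then have tC: "t \<in> C" using t by (auto simp: cfg_def)
    define C0 where "C0 = C - {t}"
    have C0: "C0 \<subseteq> {2..t-1}"
    proof
      fix x assume "x \<in> C0" then have "x \<in> C" "x \<noteq> t" unfolding C0_def by auto
      then show "x \<in> {2..t-1}" using C(1) by force
    qed
    have Ceq: "C = insert t C0" using tC unfolding C0_def by auto
    have "H (cfg C0)" using eqv[OF C0] C(2) Ceq by simp
    then show "C \<in> insert t ` A" using Ceq C0 unfolding A_def by auto
  next
    fix C assume "C \<in> insert t ` A"
    then obtain C0 where C0: "C0 \<subseteq> {2..t-1}" "H (cfg C0)" and Ceq: "C = insert t C0"
      unfolding A_def by auto
    have "C0 \<subseteq> {2..t}"
    proof
      fix x assume "x \<in> C0" then have "x \<in> {2..t-1}" using C0(1) by blast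
      then show "x \<in> {2..t}" by auto
    qed
    then show "C \<in> {C. C \<subseteq> {2..t} \<and> E (cfg C)}" using eqv[OF C0(1)] C0(2) Ceq t by auto
  qed
  have inj: "inj_on (insert t) A"
  proof (rule inj_onI)
    fix X Z assume "X \<in> A" "Z \<in> A" "insert t X = insert t Z"
    moreover have "t \<notin> {2..t-1}" using t by auto
    moreover have "t \<notin> X" "t \<notin> Z" using \<open>X \<in> A\<close> \<open>Z \<in> A\<close> calculation(4) unfolding A_def by blast+
    ultimately show "X = Z" by (metis insert_ident)
  qed
  have tm: "cprob dt p0 q0 t (cfg (insert t C0)) * ydens Q lik y t (cfg (insert t C0)) =
     cprob dt p0 q0 (t-1) (cfg C0) * ydens Q lik y (t-1) (cfg C0) * (margL Q lik y t t * q0)"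
    if C0: "C0 \<in> A" for C0
  proof -
    have C0': "C0 \<subseteq> {2..t-1}" "H (cfg C0)" using C0 unfolding A_def by auto
    have o: "opn dt (cfg (insert t C0)) t" using opnt[OF C0'(1) C0'(2)] .
    have "cprob dt p0 q0 t (cfg (insert t C0)) = cprob dt p0 q0 (t-1) (cfg (insert t C0)) * q0"
      using cprob_step[of t dt p0 q0 "cfg (insert t C0)"] o t by (auto simp: cfg_def)
    also have "cprob dt p0 q0 (t-1) (cfg (insert t C0)) = cprob dt p0 q0 (t-1) (cfg C0)"
      using t by (intro cprob_local) (auto simp: cfg_def)
    finally have cp: "cprob dt p0 q0 t (cfg (insert t C0)) = cprob dt p0 q0 (t-1) (cfg C0) * q0" .
    have yd: "ydens Q lik y t (cfg (insert t C0)) = ydens Q lik y (t-1) (cfg C0) * margL Q lik y t t"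
      using ydens_new[where lik=lik and y=y, OF Q C0'(1) _ int] t by auto
    show ?thesis using cp yd by simp
  qed
  have "joint Q lik y dt p0 q0 t E = (\<Sum>C\<in>insert t ` A. cprob dt p0 q0 t (cfg C) * ydens Q lik y t (cfg C))"
    unfolding joint_def S ..
  also have "\<dots> = (\<Sum>C0\<in>A. cprob dt p0 q0 t (cfg (insert t C0)) * ydens Q lik y t (cfg (insert t C0)))"
    by (subst sum.reindex[OF inj]) simp
  also have "\<dots> = (\<Sum>C0\<in>A. cprob dt p0 q0 (t-1) (cfg C0) * ydens Q lik y (t-1) (cfg C0) * (margL Q lik y t t * q0))"
    using tm by (intro sum.cong refl) auto
  also have "\<dots> = joint Q lik y dt p0 q0 (t-1) H * (margL Q lik y t t * q0)"
    unfolding joint_def A_def by (simp add: sum_distrib_right)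
  finally show ?thesis using GaE HcH by simp
qed

lemma opn_2: "\<not> opn dt c 2"
  unfolding opn_def is_open_def by auto

lemma Hc_base:
  assumes Q: "prob_space Q"
    and int: "\<And>a b. 1 \<le> a \<Longrightarrow> a \<le> b \<Longrightarrow> b \<le> 2 \<Longrightarrow>
           integrable Q (\<lambda>\<theta>. \<Prod>s\<in>{a..b}. lik (y s) \<theta>)"
  shows "Hc Q lik y dt p0 q0 2 0 = p0 * margL Q lik y 1 1 * margL Q lik y 2 2"
proof -
  have l0: "lastchg (cfg {}) 2 = 1" by (intro lastchg_eqI) (auto simp: cfg_def)
  have l2: "lastchg (cfg {2}) 2 = 2" by (intro lastchg_eqI) (auto simp: cfg_def)
  have a2: "\<not> anom dt (cfg {2}) 2" using anom_opn[of 2 dt] opn_2 by auto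
  have P: "{C. C \<subseteq> {2..2::nat}} = {{}, {2}}" by (auto simp: subset_singleton_iff)
  have S: "{C. C \<subseteq> {2..2::nat} \<and> runlen (cfg C) 2 = 0 \<and> \<not> anom dt (cfg C) 2} = {{2}}"
  proof -
    have "{C. C \<subseteq> {2..2::nat} \<and> runlen (cfg C) 2 = 0 \<and> \<not> anom dt (cfg C) 2}
       = {C \<in> {C. C \<subseteq> {2..2::nat}}. runlen (cfg C) 2 = 0 \<and> \<not> anom dt (cfg C) 2}" by auto
    also have "\<dots> = {{2}}" unfolding P using l0 l2 a2 by (auto simp: runlen_def)
    finally show ?thesis .
  qed
  have cp: "cprob dt p0 q0 2 (cfg {2}) = p0" unfolding cprob_def using opn_2 by (simp add: cfg_def)
  have y1: "ydens Q lik y 1 (cfg {}) = margL Q lik y 1 1"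
  proof -
    have J: "{u\<in>{1..1::nat}. cfg {} u} = {1}" by (auto simp: cfg_def)
    have l1: "lastchg (cfg {}) 1 = 1" by (intro lastchg_eqI) (auto simp: cfg_def)
    have sg: "seg (cfg {}) 1 1 = {1}" unfolding seg_def using l1 by auto
    have "ydens Q lik y 1 (cfg {}) = (\<Prod>u\<in>{u\<in>{1..1::nat}. cfg {} u}. \<integral>\<theta>. (\<Prod>s\<in>seg (cfg {}) 1 u. lik (y s) \<theta>) \<partial>Q)"
      by (rule ydens_prod[where c="cfg {}" and lik=lik and y=y and t=1, OF Q cfg_1]) (use int in auto)
    also have "\<dots> = margL Q lik y 1 1" using sg by (subst J) (simp add: margL_def One_nat_def)
    finally show ?thesis .
  qed
  have y2: "ydens Q lik y 2 (cfg {2}) = ydens Q lik y 1 (cfg {}) * margL Q lik y 2 2"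
    using ydens_new[of Q "{}" 2 lik y, OF Q _ _ int] by simp
  have "Hc Q lik y dt p0 q0 2 0 = joint Q lik y dt p0 q0 2 (\<lambda>c. runlen c 2 = 0 \<and> \<not> anom dt c 2)"
    unfolding Hc_def by simp
  then show ?thesis unfolding joint_def S using cp y1 y2 by simp
qed

theorem theorem3:
  fixes Q :: "'th measure" and lik :: "'y \<Rightarrow> 'th \<Rightarrow> real" and y :: "nat \<Rightarrow> 'y"
    and T dt :: nat and p0 q0 :: real
  assumes "T \<ge> 3" and "dt \<ge> 1"
    and "0 < p0" "p0 < 1" "0 < q0" "q0 < 1"
    and "prob_space Q"
    and "\<And>v. lik v \<in> borel_measurable Q"
    and "\<And>v \<theta>. 0 \<le> lik v \<theta>"
    and "\<And>a b. 1 \<le> a \<Longrightarrow> a \<le> b \<Longrightarrow> b \<le> T \<Longrightarrow>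
           integrable Q (\<lambda>\<theta>. \<Prod>s\<in>{a..b}. lik (y s) \<theta>)"
  shows "Ga Q lik y dt p0 q0 3 0 0
           = margL Q lik y 1 1 * margL Q lik y 2 2 * margL Q lik y 3 3 * p0 * q0
       \<and> (\<forall>t r r'. 3 < t \<and> t \<le> T \<and> r \<le> t - 3 \<and> r' \<le> min (dt - 1) (t - r - 3) \<longrightarrow>
            Ga Q lik y dt p0 q0 t r' r =
              (if r > 0 then Ga Q lik y dt p0 q0 (t - 1) r' (r - 1) * predP Q lik y (t - r) t * (1 - p0)
               else Hc Q lik y dt p0 q0 (t - 1) r' * margL Q lik y t t * q0))"
proof
  note Q = assms(7) and nn = assms(9) and int = assms(10)
  have int3: "\<And>a b. 1 \<le> a \<Longrightarrow> a \<le> b \<Longrightarrow> b \<le> 3 \<Longrightarrow>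
           integrable Q (\<lambda>\<theta>. \<Prod>s\<in>{a..b}. lik (y s) \<theta>)" using int assms(1) by auto
  have int2: "\<And>a b. 1 \<le> a \<Longrightarrow> a \<le> b \<Longrightarrow> b \<le> 2 \<Longrightarrow>
           integrable Q (\<lambda>\<theta>. \<Prod>s\<in>{a..b}. lik (y s) \<theta>)" using int assms(1) by auto
  have "Ga Q lik y dt p0 q0 3 0 0 = Hc Q lik y dt p0 q0 (3-1) 0 * margL Q lik y 3 3 * q0"
    by (rule Ga_step_zero[where lik=lik and y=y, OF Q int3]) (use assms(2) in auto)
  also have "Hc Q lik y dt p0 q0 (3-1) 0 = p0 * margL Q lik y 1 1 * margL Q lik y 2 2"
    using Hc_base[where lik=lik and y=y, OF Q int2] by simp
  finally show "Ga Q lik y dt p0 q0 3 0 0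
           = margL Q lik y 1 1 * margL Q lik y 2 2 * margL Q lik y 3 3 * p0 * q0" by simp
next
  note Q = assms(7) and nn = assms(9) and int = assms(10)
  show "\<forall>t r r'. 3 < t \<and> t \<le> T \<and> r \<le> t - 3 \<and> r' \<le> min (dt - 1) (t - r - 3) \<longrightarrow>
            Ga Q lik y dt p0 q0 t r' r =
              (if r > 0 then Ga Q lik y dt p0 q0 (t - 1) r' (r - 1) * predP Q lik y (t - r) t * (1 - p0)
               else Hc Q lik y dt p0 q0 (t - 1) r' * margL Q lik y t t * q0)"
  proof (intro allI impI)
    fix t r r' assume h: "3 < t \<and> t \<le> T \<and> r \<le> t - 3 \<and> r' \<le> min (dt - 1) (t - r - 3)"
    have intt: "\<And>a b. 1 \<le> a \<Longrightarrow> a \<le> b \<Longrightarrow> b \<le> t \<Longrightarrow>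
           integrable Q (\<lambda>\<theta>. \<Prod>s\<in>{a..b}. lik (y s) \<theta>)" using int h by auto
    show "Ga Q lik y dt p0 q0 t r' r =
              (if r > 0 then Ga Q lik y dt p0 q0 (t - 1) r' (r - 1) * predP Q lik y (t - r) t * (1 - p0)
               else Hc Q lik y dt p0 q0 (t - 1) r' * margL Q lik y t t * q0)"
    proof (cases "r > 0")
      case True
      then show ?thesis using Ga_step_pos[where lik=lik and y=y and r=r and t=t, OF Q nn intt] h by auto
    next
      case False
      then have r0: "r = 0" by simp
      have "Ga Q lik y dt p0 q0 t r' 0 = Hc Q lik y dt p0 q0 (t-1) r' * margL Q lik y t t * q0"
        by (rule Ga_step_zero[where lik=lik and y=y, OF Q intt]) (use h r0 assms(2) in auto)
      then show ?thesis using r0 by simp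
    qed
  qed
qed

end
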